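(* Let $\mathcal{H}_S\cong\mathbb{C}^d$ (system) and $\mathcal{H}_E$ (environment) be finite-dimensional Hilbert spaces, let $\eta$ be a density operator on $\mathcal{H}_E$, and let $U_1,U_2$ be unitaries on $\mathcal{H}_S\otimes\mathcal{H}_E$ describing the joint evolution from time $r$ to time $s$ and from time $s$ to time $t$ ($r<s<t$), respectively. Define the linear maps on $\mathcal{B}(\mathcal{H}_S)$ $$\Lambda_{s:r}(X)=\operatorname{tr}_E[U_1(X\otimes\eta)U_1^\dagger],\qquad \Lambda_{t:r}(X)=\operatorname{tr}_E[U_2U_1(X\otimes\eta)U_1^\dagger U_2^\dagger],$$ and, for each density operator $\rho$ on $\mathcal{H}_S$, $\eta_s(\rho):=\operatorname{tr}_S[U_1(\rho\otimes\eta)U_1^\dagger]$ and $\Lambda^{(\rho)}_{t:s}(\sigma):=\operatorname{tr}_E[U_2(\sigma\otimes\eta_s(\rho))U_2^\dagger]$. Suppose the process is oCP-divisible, i.e. $\Lambda^{(\rho)}_{t:s}$ is the same map $\Lambda_{t:s}$ for every density operator $\rho$, and $\Lambda_{t:r}=\Lambda_{t:s}\circ\Lambda_{s:r}$. If in addition $\Lambda_{s:r}$ is invertible as a linear map on $\mathcal{B}(\mathcal{H}_S)$, then the map $\Phi_{t:s}:=\Lambda_{t:r}\circ\Lambda_{s:r}^{-1}$ is completely positive, i.e. the process is also iCP-divisible.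
   Context: $\operatorname{tr}_E$ and $\operatorname{tr}_S$ denote partial traces over environment and system. The map $\Lambda^{(\rho)}_{t:s}$ describes the system dynamics from $s$ to $t$ when the system was prepared in $\rho$ at time $r$, discarded just before $s$ and replaced by a fresh state $\sigma$ at $s$. "iCP-divisible" (CP divisible by inversion) means: $\Lambda_{s:r}$ is invertible and $\Lambda_{t:r}\circ\Lambda_{s:r}^{-1}$ is completely positive. *)

theory Defs
  imports "Jordan_Normal_Form.Matrix" Complex_Main
begin

(* Operators on C^m are complex m x m matrices (JNF type 'complex mat').
   H_S = C^d, H_E = C^n, H_S (x) H_E = C^(d*n) with basis index a*n + b
   (a < d system index, b < n environment index). *)

definition adj :: "complex mat \<Rightarrow> complex mat" where
  "adj A = mat (dim_col A) (dim_row A) (\<lambda>(i,j). cnj (A $$ (j,i)))"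

definition kron :: "complex mat \<Rightarrow> complex mat \<Rightarrow> complex mat" where
  "kron A B = mat (dim_row A * dim_row B) (dim_col A * dim_col B)
     (\<lambda>(i,j). A $$ (i div dim_row B, j div dim_col B) * B $$ (i mod dim_row B, j mod dim_col B))"

definition mtrace :: "complex mat \<Rightarrow> complex" where
  "mtrace A = (\<Sum>i<dim_row A. A $$ (i,i))"

definition ptrace_E :: "nat \<Rightarrow> nat \<Rightarrow> complex mat \<Rightarrow> complex mat" where
  "ptrace_E d n M = mat d d (\<lambda>(a,a'). \<Sum>b<n. M $$ (a*n+b, a'*n+b))"

definition ptrace_S :: "nat \<Rightarrow> nat \<Rightarrow> complex mat \<Rightarrow> complex mat" where
  "ptrace_S d n M = mat n n (\<lambda>(b,b'). \<Sum>a<d. M $$ (a*n+b, a*n+b'))"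

definition hermitian :: "complex mat \<Rightarrow> bool" where
  "hermitian A \<longleftrightarrow> adj A = A"

definition psd :: "nat \<Rightarrow> complex mat \<Rightarrow> bool" where
  "psd m A \<longleftrightarrow> A \<in> carrier_mat m m \<and> hermitian A \<and>
     (\<forall>v \<in> carrier_vec m. Im (conjugate v \<bullet> (A *\<^sub>v v)) = 0 \<and> Re (conjugate v \<bullet> (A *\<^sub>v v)) \<ge> 0)"

definition density :: "nat \<Rightarrow> complex mat \<Rightarrow> bool" where
  "density m \<rho> \<longleftrightarrow> psd m \<rho> \<and> mtrace \<rho> = 1"

definition unitary_mat :: "nat \<Rightarrow> complex mat \<Rightarrow> bool" where
  "unitary_mat m U \<longleftrightarrow> U \<in> carrier_mat m m \<and> adj U * U = 1\<^sub>m m \<and> U * adj U = 1\<^sub>m m"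

definition linear_on :: "nat \<Rightarrow> (complex mat \<Rightarrow> complex mat) \<Rightarrow> bool" where
  "linear_on d \<Phi> \<longleftrightarrow>
     (\<forall>X \<in> carrier_mat d d. \<Phi> X \<in> carrier_mat d d) \<and>
     (\<forall>X \<in> carrier_mat d d. \<forall>Y \<in> carrier_mat d d. \<Phi> (X + Y) = \<Phi> X + \<Phi> Y) \<and>
     (\<forall>X \<in> carrier_mat d d. \<forall>c. \<Phi> (c \<cdot>\<^sub>m X) = c \<cdot>\<^sub>m \<Phi> X)"

(* (id_k (x) Phi) applied to an operator on C^k (x) C^d, index p*d + a *)
definition ampliate :: "nat \<Rightarrow> nat \<Rightarrow> (complex mat \<Rightarrow> complex mat) \<Rightarrow> complex mat \<Rightarrow> complex mat" where
  "ampliate k d \<Phi> M = mat (k*d) (k*d) (\<lambda>(i,j).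
     \<Phi> (mat d d (\<lambda>(a,a'). M $$ ((i div d)*d + a, (j div d)*d + a'))) $$ (i mod d, j mod d))"

definition completely_positive :: "nat \<Rightarrow> (complex mat \<Rightarrow> complex mat) \<Rightarrow> bool" where
  "completely_positive d \<Phi> \<longleftrightarrow> linear_on d \<Phi> \<and>
     (\<forall>k. \<forall>M. psd (k*d) M \<longrightarrow> psd (k*d) (ampliate k d \<Phi> M))"

definition Lam_sr :: "nat \<Rightarrow> nat \<Rightarrow> complex mat \<Rightarrow> complex mat \<Rightarrow> complex mat \<Rightarrow> complex mat" where
  "Lam_sr d n \<eta> U1 X = ptrace_E d n (U1 * kron X \<eta> * adj U1)"

definition Lam_tr :: "nat \<Rightarrow> nat \<Rightarrow> complex mat \<Rightarrow> complex mat \<Rightarrow> complex mat \<Rightarrow> complex mat \<Rightarrow> complex mat" where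
  "Lam_tr d n \<eta> U1 U2 X = ptrace_E d n (U2 * U1 * kron X \<eta> * adj U1 * adj U2)"

definition eta_s :: "nat \<Rightarrow> nat \<Rightarrow> complex mat \<Rightarrow> complex mat \<Rightarrow> complex mat \<Rightarrow> complex mat" where
  "eta_s d n \<eta> U1 \<rho> = ptrace_S d n (U1 * kron \<rho> \<eta> * adj U1)"

definition Lam_ts_rho :: "nat \<Rightarrow> nat \<Rightarrow> complex mat \<Rightarrow> complex mat \<Rightarrow> complex mat \<Rightarrow> complex mat \<Rightarrow> complex mat \<Rightarrow> complex mat" where
  "Lam_ts_rho d n \<eta> U1 U2 \<rho> \<sigma> = ptrace_E d n (U2 * kron \<sigma> (eta_s d n \<eta> U1 \<rho>) * adj U2)"

end

theory Submission
  imports Defs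
begin


definition QF :: "nat set \<Rightarrow> (nat \<Rightarrow> nat \<Rightarrow> complex) \<Rightarrow> (nat \<Rightarrow> complex) \<Rightarrow> complex" where
  "QF S A v = (\<Sum>i\<in>S. \<Sum>j\<in>S. cnj (v i) * A i j * v j)"

definition posf :: "nat set \<Rightarrow> (nat \<Rightarrow> nat \<Rightarrow> complex) \<Rightarrow> bool" where
  "posf S A \<longleftrightarrow> (\<forall>i\<in>S. \<forall>j\<in>S. A j i = cnj (A i j)) \<and> (\<forall>v. Im (QF S A v) = 0 \<and> Re (QF S A v) \<ge> 0)"

lemma QF_supp:
  assumes "finite S" "T \<subseteq> S" "\<And>i. i \<in> S - T \<Longrightarrow> v i = 0"
  shows "QF S A v = QF T A v"
proof -
  have "QF S A v = (\<Sum>i\<in>T. \<Sum>j\<in>S. cnj (v i) * A i j * v j)"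
    unfolding QF_def using assms by (intro sum.mono_neutral_right) auto
  also have "\<dots> = QF T A v"
    unfolding QF_def using assms by (intro sum.cong refl sum.mono_neutral_right) auto
  finally show ?thesis .
qed

lemma posf_diag:
  assumes "posf S A" "r \<in> S" "finite S"
  shows "Im (A r r) = 0 \<and> Re (A r r) \<ge> 0"
proof -
  let ?v = "\<lambda>i. if i = r then (1::complex) else 0"
  have "QF S A ?v = QF {r} A ?v" using assms by (intro QF_supp) auto
  also have "\<dots> = A r r" by (simp add: QF_def)
  finally show ?thesis using assms unfolding posf_def by metis
qed

lemma posf_zero_row:
  assumes "posf S A" "r \<in> S" "j \<in> S" "finite S" "A r r = 0"
  shows "A r j = 0"
proof (rule ccontr)
  assume a0: "A r j \<noteq> 0"
  then have jr: "j \<noteq> r" using assms by auto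
  define a where "a = A r j"
  have herm: "A j r = cnj a" using assms(1,2,3) unfolding posf_def a_def by blast
  have jj: "Re (A j j) \<ge> 0" using posf_diag assms by blast
  define s where "s = (Re (A j j) + 1) / (cmod a)^2"
  have na: "cmod a > 0" using a0 a_def by simp
  define t where "t = - complex_of_real s * a"
  let ?v = "\<lambda>i. if i = r then t else if i = j then (1::complex) else 0"
  have "QF S A ?v = QF {r,j} A ?v" using assms by (intro QF_supp) auto
  also have "\<dots> = cnj t * A r j + A j r * t + A j j"
    using jr assms(5) by (simp add: QF_def)
  also have "\<dots> = - 2 * complex_of_real (s * (cmod a)^2) + A j j"
    unfolding herm a_def[symmetric] t_def
    by (simp add: complex_norm_square[symmetric] algebra_simps)
  finally have "Re (QF S A ?v) = - 2 * (s * (cmod a)^2) + Re (A j j)" by simp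
  also have "\<dots> = - Re (A j j) - 2" unfolding s_def using na by (simp add: field_simps)
  finally have "Re (QF S A ?v) < 0" using jj by simp
  then show False using assms(1) unfolding posf_def by (meson not_le)
qed

lemma posf_restrict:
  assumes "posf (insert r S) A" "r \<notin> S" "finite S"
  shows "posf S A"
proof -
  have "QF S A v = QF (insert r S) A (v(r := 0))" for v
  proof -
    have "QF (insert r S) A (v(r := 0)) = QF S A (v(r := 0))"
      using assms by (intro QF_supp) auto
    also have "\<dots> = QF S A v" unfolding QF_def using assms(2)
      by (intro sum.cong refl) auto
    finally show ?thesis by simp
  qed
  then show ?thesis using assms(1) unfolding posf_def by (metis insert_iff)
qed

lemma schur_step:
  assumes P: "posf (insert r S) A" and rS: "r \<notin> S" and fin: "finite S"
    and c: "A r r = complex_of_real c" and cpos: "c > 0"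
  defines "u \<equiv> \<lambda>i. A i r / complex_of_real (sqrt c)"
  shows "posf S (\<lambda>i j. A i j - u i * cnj (u j))"
proof -
  have herm: "\<And>i j. i \<in> insert r S \<Longrightarrow> j \<in> insert r S \<Longrightarrow> A j i = cnj (A i j)"
    using P unfolding posf_def by blast
  define q where "q = complex_of_real (sqrt c)"
  have q0: "q \<noteq> 0" using cpos q_def by simp
  have qq: "q * q = A r r" using c cpos q_def
    by (simp flip: of_real_mult)
  have cq: "cnj q = q" unfolding q_def by simp
  have key: "QF S (\<lambda>i j. A i j - u i * cnj (u j)) v = QF (insert r S) A (v(r := - (\<Sum>j\<in>S. A r j * v j) / A r r))" for v
  proof -
    define \<beta> where "\<beta> = (\<Sum>j\<in>S. A r j * v j)"
    define t where "t = - \<beta> / A r r"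
    have Arr0: "A r r \<noteq> 0" using q0 qq by auto
    have cArr: "cnj (A r r) = A r r" using c by simp
    have hr: "\<forall>i\<in>S. A i r = cnj (A r i)" using herm by blast
    have b1: "(\<Sum>i\<in>S. cnj (v i) * A i r) = cnj \<beta>"
      unfolding \<beta>_def cnj_sum by (rule sum.cong) (use hr in \<open>auto simp: mult.commute\<close>)
    have "QF (insert r S) A (v(r := t)) =
        cnj t * A r r * t + (\<Sum>j\<in>S. cnj t * A r j * v j)
        + ((\<Sum>i\<in>S. cnj (v i) * A i r * t) + QF S A v)"
    proof -
      have e: "\<And>i. i \<in> S \<Longrightarrow> (v(r := t)) i = v i" using rS by auto
      have "QF (insert r S) A (v(r := t)) = cnj t * A r r * t + (\<Sum>j\<in>S. cnj t * A r j * (v(r := t)) j)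
        + ((\<Sum>i\<in>S. cnj ((v(r := t)) i) * A i r * t) + QF S A (v(r := t)))"
        unfolding QF_def using rS fin by (simp add: sum.distrib)
      also have "QF S A (v(r := t)) = QF S A v" unfolding QF_def
        using rS by (auto intro!: sum.cong)
      also have "(\<Sum>j\<in>S. cnj t * A r j * (v(r := t)) j) = (\<Sum>j\<in>S. cnj t * A r j * v j)"
        using rS by (auto intro!: sum.cong)
      also have "(\<Sum>i\<in>S. cnj ((v(r := t)) i) * A i r * t) = (\<Sum>i\<in>S. cnj (v i) * A i r * t)"
        using rS by (auto intro!: sum.cong)
      finally show ?thesis .
    qed
    also have "(\<Sum>j\<in>S. cnj t * A r j * v j) = cnj t * \<beta>"
      unfolding \<beta>_def by (simp add: sum_distrib_left mult.assoc)
    also have "(\<Sum>i\<in>S. cnj (v i) * A i r * t) = cnj \<beta> * t"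
      unfolding b1[symmetric] by (simp add: sum_distrib_right)
    finally have e1: "QF (insert r S) A (v(r := t)) =
        cnj t * A r r * t + cnj t * \<beta> + (cnj \<beta> * t + QF S A v)" .
    have e1': "cnj t * A r r * t + cnj t * \<beta> + cnj \<beta> * t = - cnj \<beta> * \<beta> / A r r"
      unfolding t_def using Arr0 cArr by (simp add: field_simps)
    have "QF S (\<lambda>i j. A i j - u i * cnj (u j)) v = QF S A v -
        (\<Sum>i\<in>S. \<Sum>j\<in>S. (cnj (v i) * u i) * (cnj (u j) * v j))"
      unfolding QF_def by (simp add: sum_subtractf algebra_simps)
    also have "(\<Sum>i\<in>S. \<Sum>j\<in>S. (cnj (v i) * u i) * (cnj (u j) * v j)) =
        (\<Sum>i\<in>S. cnj (v i) * u i) * (\<Sum>j\<in>S. cnj (u j) * v j)"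
      by (simp add: sum_product)
    also have "(\<Sum>i\<in>S. cnj (v i) * u i) = cnj \<beta> / q"
      unfolding b1[symmetric] u_def q_def[symmetric] by (simp add: sum_divide_distrib)
    also have "(\<Sum>j\<in>S. cnj (u j) * v j) = \<beta> / q"
      unfolding \<beta>_def u_def q_def[symmetric] sum_divide_distrib
      by (rule sum.cong) (use hr cq in auto)
    also have "cnj \<beta> / q * (\<beta> / q) = cnj \<beta> * \<beta> / A r r"
      using qq[symmetric] by simp
    finally have h: "QF S (\<lambda>i j. A i j - u i * cnj (u j)) v = QF S A v - cnj \<beta> * \<beta> / A r r" .
    have "QF (insert r S) A (v(r := t)) = (cnj t * A r r * t + cnj t * \<beta> + cnj \<beta> * t) + QF S A v"
      unfolding e1 by (simp add: algebra_simps)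
    also have "\<dots> = QF S A v - cnj \<beta> * \<beta> / A r r" unfolding e1' by simp
    finally show ?thesis unfolding t_def[symmetric] \<beta>_def[symmetric] h by simp
  qed
  have "\<forall>i\<in>S. \<forall>j\<in>S. A j i - u j * cnj (u i) = cnj (A i j - u i * cnj (u j))"
  proof (intro ballI)
    fix i j assume "i \<in> S" "j \<in> S"
    then have "A j i = cnj (A i j)" using herm by blast
    then show "A j i - u j * cnj (u i) = cnj (A i j - u i * cnj (u j))" by simp
  qed
  moreover have "\<forall>v. Im (QF S (\<lambda>i j. A i j - u i * cnj (u j)) v) = 0 \<and> Re (QF S (\<lambda>i j. A i j - u i * cnj (u j)) v) \<ge> 0"
  proof
    fix v
    have "Im (QF (insert r S) A w) = 0 \<and> Re (QF (insert r S) A w) \<ge> 0" for w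
      using P unfolding posf_def by blast
    then show "Im (QF S (\<lambda>i j. A i j - u i * cnj (u j)) v) = 0 \<and> Re (QF S (\<lambda>i j. A i j - u i * cnj (u j)) v) \<ge> 0"
      unfolding key by blast
  qed
  ultimately show ?thesis unfolding posf_def by blast
qed

lemma posf_decomp:
  assumes "finite S" "posf S A"
  shows "\<exists>(K::nat) f. \<forall>i\<in>S. \<forall>j\<in>S. A i j = (\<Sum>\<kappa><K. f \<kappa> i * cnj (f \<kappa> j))"
  using assms
proof (induction S arbitrary: A rule: finite_induct)
  case empty
  then show ?case by auto
next
  case (insert r S)
  have herm: "\<And>i j. i \<in> insert r S \<Longrightarrow> j \<in> insert r S \<Longrightarrow> A j i = cnj (A i j)"
    using insert.prems unfolding posf_def by blast
  have d: "Im (A r r) = 0 \<and> Re (A r r) \<ge> 0"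
    using posf_diag[OF insert.prems] insert.hyps by auto
  show ?case
  proof (cases "A r r = 0")
    case True
    have z: "A r j = 0" if "j \<in> insert r S" for j
      using posf_zero_row[OF insert.prems _ that _ True] insert.hyps by auto
    have z2: "A j r = 0" if "j \<in> insert r S" for j
    proof -
      have "A j r = cnj (A r j)" using herm that by blast
      then show ?thesis using z[OF that] by simp
    qed
    from insert.IH[OF posf_restrict[OF insert.prems insert.hyps(2,1)]]
    obtain K :: nat and f where f: "\<forall>i\<in>S. \<forall>j\<in>S. A i j = (\<Sum>\<kappa><K. f \<kappa> i * cnj (f \<kappa> j))" by blast
    define g where "g = (\<lambda>\<kappa> i. if i = r then 0 else f \<kappa> i)"
    have "A i j = (\<Sum>\<kappa><K. g \<kappa> i * cnj (g \<kappa> j))" if "i \<in> insert r S" "j \<in> insert r S" for i j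
    proof (cases "i = r \<or> j = r")
      case True
      then show ?thesis using z z2 that unfolding g_def by auto
    next
      case False
      then show ?thesis using f that unfolding g_def by auto
    qed
    then show ?thesis by blast
  next
    case False
    define c where "c = Re (A r r)"
    have c: "A r r = complex_of_real c" using d c_def by (simp add: complex_eq_iff)
    have cpos: "c > 0" using d False c by auto
    define u where "u = (\<lambda>i. A i r / complex_of_real (sqrt c))"
    from insert.IH[OF schur_step[OF insert.prems insert.hyps(2,1) c cpos]]
    obtain K :: nat and f where f: "\<forall>i\<in>S. \<forall>j\<in>S. A i j - u i * cnj (u j) = (\<Sum>\<kappa><K. f \<kappa> i * cnj (f \<kappa> j))"
      unfolding u_def by blast
    define g where "g = (\<lambda>\<kappa> i. if \<kappa> = K then u i else if i = r then 0 else f \<kappa> i)"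
    have sq: "complex_of_real (sqrt c) * complex_of_real (sqrt c) = A r r"
      using c cpos by (simp flip: of_real_mult)
    have sq0: "complex_of_real (sqrt c) \<noteq> 0" using cpos by simp
    have "A i j = (\<Sum>\<kappa><Suc K. g \<kappa> i * cnj (g \<kappa> j))" if ij: "i \<in> insert r S" "j \<in> insert r S" for i j
    proof -
      have "(\<Sum>\<kappa><Suc K. g \<kappa> i * cnj (g \<kappa> j)) =
          (\<Sum>\<kappa><K. (if i = r then 0 else f \<kappa> i) * cnj (if j = r then 0 else f \<kappa> j)) + u i * cnj (u j)"
        unfolding g_def by simp
      also have "\<dots> = A i j"
      proof (cases "i = r \<or> j = r")
        case True
        have cs: "cnj (complex_of_real (sqrt c)) = complex_of_real (sqrt c)" by simp
        have "u i * cnj (u j) = A i j"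
        proof (cases "i = r")
          case True
          have "A r j = cnj (A j r)" using herm ij by blast
          then show ?thesis unfolding u_def using sq sq0 c True
            by (simp add: field_simps)
        next
          case False
          then have "j = r" using \<open>i = r \<or> j = r\<close> by simp
          then show ?thesis unfolding u_def using sq sq0 c
            by (simp add: field_simps)
        qed
        moreover have "(\<Sum>\<kappa><K. (if i = r then 0 else f \<kappa> i) * cnj (if j = r then 0 else f \<kappa> j)) = 0"
          using True by (cases "i = r") auto
        ultimately show ?thesis by simp
      next
        case False
        then show ?thesis using f ij by (auto simp: algebra_simps)
      qed
      finally show ?thesis by simp
    qed
    then show ?thesis by blast
  qed
qed



definition brep :: "nat \<Rightarrow> complex mat \<Rightarrow> ('k \<Rightarrow> nat \<Rightarrow> complex) \<Rightarrow> ('k \<Rightarrow> nat \<Rightarrow> complex) \<Rightarrow> 'k set \<Rightarrow> bool" where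
  "brep N K F H S \<longleftrightarrow> finite S \<and> (\<forall>i<N. \<forall>j<N. K $$ (i,j) = (\<Sum>\<kappa>\<in>S. F \<kappa> i * cnj (H \<kappa> j)))"

lemma sum_swap3: "(\<Sum>y\<in>C. \<Sum>x\<in>B. \<Sum>k\<in>A. f k x y) = (\<Sum>k\<in>A. \<Sum>x\<in>B. \<Sum>y\<in>C. f k x y)"
proof -
  have "(\<Sum>y\<in>C. \<Sum>x\<in>B. \<Sum>k\<in>A. f k x y) = (\<Sum>y\<in>C. \<Sum>k\<in>A. \<Sum>x\<in>B. f k x y)"
    by (rule sum.cong[OF refl], rule sum.swap)
  also have "\<dots> = (\<Sum>k\<in>A. \<Sum>y\<in>C. \<Sum>x\<in>B. f k x y)" by (rule sum.swap)
  also have "\<dots> = (\<Sum>k\<in>A. \<Sum>x\<in>B. \<Sum>y\<in>C. f k x y)"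
    by (rule sum.cong[OF refl], rule sum.swap)
  finally show ?thesis .
qed

lemma adj_carrier[simp]: "U \<in> carrier_mat N M \<Longrightarrow> adj U \<in> carrier_mat M N"
  unfolding adj_def by auto

lemma entry_UKU:
  assumes "U \<in> carrier_mat N N" "K \<in> carrier_mat N N" "i < N" "j < N"
  shows "(U * K * adj U) $$ (i,j) = (\<Sum>y<N. (\<Sum>x<N. U $$ (i,x) * K $$ (x,y)) * cnj (U $$ (j,y)))"
  using assms by (simp add: scalar_prod_def adj_def atLeast0LessThan)

lemma brep_cong:
  assumes U: "U \<in> carrier_mat N N" and K: "K \<in> carrier_mat N N" and b: "brep N K F H S"
  shows "brep N (U * K * adj U) (\<lambda>\<kappa> i. \<Sum>x<N. U $$ (i,x) * F \<kappa> x) (\<lambda>\<kappa> i. \<Sum>x<N. U $$ (i,x) * H \<kappa> x) S"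
  unfolding brep_def
proof (intro conjI allI impI)
  show "finite S" using b unfolding brep_def by simp
  fix i j assume ij: "i < N" "j < N"
  have Kx: "\<And>x y. x < N \<Longrightarrow> y < N \<Longrightarrow> K $$ (x,y) = (\<Sum>\<kappa>\<in>S. F \<kappa> x * cnj (H \<kappa> y))"
    using b unfolding brep_def by simp
  have "(U * K * adj U) $$ (i,j) = (\<Sum>y<N. (\<Sum>x<N. U $$ (i,x) * K $$ (x,y)) * cnj (U $$ (j,y)))"
    using entry_UKU[OF U K ij] .
  also have "\<dots> = (\<Sum>y<N. \<Sum>x<N. \<Sum>\<kappa>\<in>S. U $$ (i,x) * F \<kappa> x * (cnj (U $$ (j,y)) * cnj (H \<kappa> y)))"
    by (intro sum.cong refl) (simp add: Kx sum_distrib_left sum_distrib_right mult_ac)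
  also have "\<dots> = (\<Sum>\<kappa>\<in>S. \<Sum>x<N. \<Sum>y<N. U $$ (i,x) * F \<kappa> x * (cnj (U $$ (j,y)) * cnj (H \<kappa> y)))"
    by (rule sum_swap3)
  also have "\<dots> = (\<Sum>\<kappa>\<in>S. (\<Sum>x<N. U $$ (i,x) * F \<kappa> x) * cnj (\<Sum>x<N. U $$ (j,x) * H \<kappa> x))"
    by (simp add: sum_product)
  finally show "(U * K * adj U) $$ (i,j) = (\<Sum>\<kappa>\<in>S. (\<Sum>x<N. U $$ (i,x) * F \<kappa> x) * cnj (\<Sum>x<N. U $$ (j,x) * H \<kappa> x))" .
qed

lemma idx_lt: "(c::nat) < d \<Longrightarrow> e < n \<Longrightarrow> c * n + e < d * n"
proof -
  assume a: "c < d" "e < n"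
  have "c * n + e < c * n + n" using a by simp
  also have "\<dots> = Suc c * n" by simp
  also have "\<dots> \<le> d * n" using a by (intro mult_le_mono1) simp
  finally show ?thesis .
qed

lemma brep_kron:
  assumes A: "A \<in> carrier_mat d d" and B: "B \<in> carrier_mat n n"
    and bA: "brep d A F1 H1 S" and bB: "brep n B F2 H2 T"
  shows "brep (d*n) (kron A B) (\<lambda>(\<kappa>,m) i. F1 \<kappa> (i div n) * F2 m (i mod n))
     (\<lambda>(\<kappa>,m) i. H1 \<kappa> (i div n) * H2 m (i mod n)) (S \<times> T)"
  unfolding brep_def
proof (intro conjI allI impI)
  show "finite (S \<times> T)" using bA bB unfolding brep_def by simp
  fix i j assume ij: "i < d*n" "j < d*n"
  then have n0: "n > 0" by (cases n) auto
  have d1: "i div n < d" "j div n < d" using ij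
    by (simp_all add: less_mult_imp_div_less)
  have m1: "i mod n < n" "j mod n < n" using n0 by simp_all
  have "kron A B $$ (i,j) = A $$ (i div n, j div n) * B $$ (i mod n, j mod n)"
    using A B ij unfolding kron_def by simp
  also have "\<dots> = (\<Sum>\<kappa>\<in>S. F1 \<kappa> (i div n) * cnj (H1 \<kappa> (j div n))) * (\<Sum>m\<in>T. F2 m (i mod n) * cnj (H2 m (j mod n)))"
    using bA bB d1 m1 unfolding brep_def by simp
  also have "\<dots> = (\<Sum>\<kappa>\<in>S. \<Sum>m\<in>T. (F1 \<kappa> (i div n) * F2 m (i mod n)) * cnj (H1 \<kappa> (j div n) * H2 m (j mod n)))"
    by (simp add: sum_product mult_ac)
  also have "\<dots> = (\<Sum>p\<in>S \<times> T. (case p of (\<kappa>,m) \<Rightarrow> F1 \<kappa> (i div n) * F2 m (i mod n)) * cnj (case p of (\<kappa>,m) \<Rightarrow> H1 \<kappa> (j div n) * H2 m (j mod n)))"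
    by (simp add: sum.cartesian_product case_prod_unfold)
  finally show "kron A B $$ (i,j) = (\<Sum>p\<in>S \<times> T. (case p of (\<kappa>,m) \<Rightarrow> \<lambda>i. F1 \<kappa> (i div n) * F2 m (i mod n)) i * cnj ((case p of (\<kappa>,m) \<Rightarrow> \<lambda>i. H1 \<kappa> (i div n) * H2 m (i mod n)) j))"
    by (simp add: case_prod_beta)
qed

lemma brep_ptrace_S:
  assumes b: "brep (d*n) M F H S"
  shows "brep n (ptrace_S d n M) (\<lambda>(\<kappa>,c) e. F \<kappa> (c*n+e)) (\<lambda>(\<kappa>,c) e. H \<kappa> (c*n+e)) (S \<times> {..<d})"
  unfolding brep_def
proof (intro conjI allI impI)
  show "finite (S \<times> {..<d})" using b unfolding brep_def by simp
  fix i j assume ij: "i < n" "j < n"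
  have "ptrace_S d n M $$ (i,j) = (\<Sum>c<d. M $$ (c*n+i, c*n+j))"
    using ij unfolding ptrace_S_def by simp
  also have "\<dots> = (\<Sum>c<d. \<Sum>\<kappa>\<in>S. F \<kappa> (c*n+i) * cnj (H \<kappa> (c*n+j)))"
    using b ij idx_lt unfolding brep_def by (intro sum.cong refl) simp
  also have "\<dots> = (\<Sum>\<kappa>\<in>S. \<Sum>c<d. F \<kappa> (c*n+i) * cnj (H \<kappa> (c*n+j)))"
    by (rule sum.swap)
  also have "\<dots> = (\<Sum>p\<in>S \<times> {..<d}. (case p of (\<kappa>,c) \<Rightarrow> \<lambda>e. F \<kappa> (c*n+e)) i * cnj ((case p of (\<kappa>,c) \<Rightarrow> \<lambda>e. H \<kappa> (c*n+e)) j))"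
    by (simp add: sum.cartesian_product case_prod_beta)
  finally show "ptrace_S d n M $$ (i,j) = (\<Sum>p\<in>S \<times> {..<d}. (case p of (\<kappa>,c) \<Rightarrow> \<lambda>e. F \<kappa> (c*n+e)) i * cnj ((case p of (\<kappa>,c) \<Rightarrow> \<lambda>e. H \<kappa> (c*n+e)) j))" .
qed

lemma brep_ptrace_E:
  assumes b: "brep (d*n) M F H S"
  shows "brep d (ptrace_E d n M) (\<lambda>(\<kappa>,b) a. F \<kappa> (a*n+b)) (\<lambda>(\<kappa>,b) a. H \<kappa> (a*n+b)) (S \<times> {..<n})"
  unfolding brep_def
proof (intro conjI allI impI)
  show "finite (S \<times> {..<n})" using b unfolding brep_def by simp
  fix i j assume ij: "i < d" "j < d"
  have "ptrace_E d n M $$ (i,j) = (\<Sum>b<n. M $$ (i*n+b, j*n+b))"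
    using ij unfolding ptrace_E_def by simp
  also have "\<dots> = (\<Sum>b<n. \<Sum>\<kappa>\<in>S. F \<kappa> (i*n+b) * cnj (H \<kappa> (j*n+b)))"
    using b ij idx_lt unfolding brep_def by (intro sum.cong refl) simp
  also have "\<dots> = (\<Sum>\<kappa>\<in>S. \<Sum>b<n. F \<kappa> (i*n+b) * cnj (H \<kappa> (j*n+b)))"
    by (rule sum.swap)
  also have "\<dots> = (\<Sum>p\<in>S \<times> {..<n}. (case p of (\<kappa>,b) \<Rightarrow> \<lambda>a. F \<kappa> (a*n+b)) i * cnj ((case p of (\<kappa>,b) \<Rightarrow> \<lambda>a. H \<kappa> (a*n+b)) j))"
    by (simp add: sum.cartesian_product case_prod_beta)
  finally show "ptrace_E d n M $$ (i,j) = (\<Sum>p\<in>S \<times> {..<n}. (case p of (\<kappa>,b) \<Rightarrow> \<lambda>a. F \<kappa> (a*n+b)) i * cnj ((case p of (\<kappa>,b) \<Rightarrow> \<lambda>a. H \<kappa> (a*n+b)) j))" .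
qed

lemma brep_psd:
  assumes X: "X \<in> carrier_mat N N" and b: "brep N X Z Z S"
  shows "psd N X"
proof -
  have fin: "finite S" using b unfolding brep_def by simp
  have Xe: "\<And>i j. i < N \<Longrightarrow> j < N \<Longrightarrow> X $$ (i,j) = (\<Sum>\<kappa>\<in>S. Z \<kappa> i * cnj (Z \<kappa> j))"
    using b unfolding brep_def by simp
  have herm: "hermitian X" unfolding hermitian_def
  proof (rule eq_matI)
    show "dim_row (adj X) = dim_row X" "dim_col (adj X) = dim_col X" using X unfolding adj_def by auto
    fix i j assume "i < dim_row X" "j < dim_col X"
    then have ij: "i < N" "j < N" using X by auto
    show "adj X $$ (i,j) = X $$ (i,j)" using X ij unfolding adj_def by (simp add: Xe mult.commute)
  qed
  have q: "conjugate v \<bullet> (X *\<^sub>v v) = (\<Sum>\<kappa>\<in>S. complex_of_real ((cmod (\<Sum>i<N. cnj (v $ i) * Z \<kappa> i))\<^sup>2))"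
    if v: "v \<in> carrier_vec N" for v
  proof -
    have "conjugate v \<bullet> (X *\<^sub>v v) = (\<Sum>i<N. cnj (v $ i) * (\<Sum>j<N. X $$ (i,j) * v $ j))"
      using X v by (simp add: scalar_prod_def atLeast0LessThan)
    also have "\<dots> = (\<Sum>i<N. \<Sum>j<N. \<Sum>\<kappa>\<in>S. (cnj (v $ i) * Z \<kappa> i) * cnj (cnj (v $ j) * Z \<kappa> j))"
      by (intro sum.cong refl) (simp add: Xe sum_distrib_left sum_distrib_right mult_ac)
    also have "\<dots> = (\<Sum>\<kappa>\<in>S. \<Sum>j<N. \<Sum>i<N. (cnj (v $ i) * Z \<kappa> i) * cnj (cnj (v $ j) * Z \<kappa> j))"
      by (rule sum_swap3)
    also have "\<dots> = (\<Sum>\<kappa>\<in>S. \<Sum>i<N. \<Sum>j<N. (cnj (v $ i) * Z \<kappa> i) * cnj (cnj (v $ j) * Z \<kappa> j))"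
      by (rule sum.cong[OF refl], rule sum.swap)
    also have "\<dots> = (\<Sum>\<kappa>\<in>S. (\<Sum>i<N. cnj (v $ i) * Z \<kappa> i) * cnj (\<Sum>i<N. cnj (v $ i) * Z \<kappa> i))"
      by (simp add: sum_product)
    also have "\<dots> = (\<Sum>\<kappa>\<in>S. complex_of_real ((cmod (\<Sum>i<N. cnj (v $ i) * Z \<kappa> i))\<^sup>2))"
      by (simp only: complex_norm_square)
    finally show ?thesis .
  qed
  show ?thesis unfolding psd_def
  proof (intro conjI ballI)
    show "X \<in> carrier_mat N N" by fact
    show "hermitian X" by fact
    fix v :: "complex vec" assume v: "v \<in> carrier_vec N"
    show "Im (conjugate v \<bullet> (X *\<^sub>v v)) = 0" unfolding q[OF v] by (simp add: Im_sum)
    show "Re (conjugate v \<bullet> (X *\<^sub>v v)) \<ge> 0" unfolding q[OF v] by (simp add: Re_sum sum_nonneg)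
  qed
qed



definition TT :: "nat \<Rightarrow> complex mat \<Rightarrow> ('g \<Rightarrow> nat \<Rightarrow> complex) \<Rightarrow> nat \<Rightarrow> ('k \<Rightarrow> nat \<Rightarrow> complex) \<Rightarrow> (('k \<times> 'g) \<times> nat) \<Rightarrow> nat \<Rightarrow> complex" where
  "TT N U G n F = (\<lambda>(\<kappa>,b) a. (\<lambda>\<kappa> i. \<Sum>x<N. U $$ (i,x) * (\<lambda>(\<kappa>,m) i. F \<kappa> (i div n) * G m (i mod n)) \<kappa> x) \<kappa> (a*n+b))"

lemma kron_carrier[simp]: "A \<in> carrier_mat d d \<Longrightarrow> B \<in> carrier_mat n n \<Longrightarrow> kron A B \<in> carrier_mat (d*n) (d*n)"
  unfolding kron_def by auto

lemma phi_rep: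
  assumes U: "U \<in> carrier_mat (d*n) (d*n)" and Y: "Y \<in> carrier_mat d d" and E: "E \<in> carrier_mat n n"
    and bY: "brep d Y F H S" and bE: "brep n E G G T"
  shows "brep d (ptrace_E d n (U * kron Y E * adj U)) (TT (d*n) U G n F) (TT (d*n) U G n H) ((S \<times> T) \<times> {..<n})"
  using brep_ptrace_E[OF brep_cong[OF U kron_carrier[OF Y E] brep_kron[OF Y E bY bE]]]
  unfolding TT_def .

lemma psd_posf:
  assumes "psd N A"
  shows "posf {..<N} (\<lambda>i j. A $$ (i,j))"
proof -
  have A: "A \<in> carrier_mat N N" and h: "adj A = A" using assms unfolding psd_def hermitian_def by auto
  have herm: "\<forall>i\<in>{..<N}. \<forall>j\<in>{..<N}. A $$ (j,i) = cnj (A $$ (i,j))"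
  proof (intro ballI)
    fix i j assume "i \<in> {..<N}" "j \<in> {..<N}"
    then have "adj A $$ (j,i) = cnj (A $$ (i,j))" using A unfolding adj_def by auto
    then show "A $$ (j,i) = cnj (A $$ (i,j))" using h by simp
  qed
  have "Im (QF {..<N} (\<lambda>i j. A $$ (i,j)) v) = 0 \<and> Re (QF {..<N} (\<lambda>i j. A $$ (i,j)) v) \<ge> 0" for v
  proof -
    define w where "w = vec N v"
    have w: "w \<in> carrier_vec N" unfolding w_def by simp
    have "conjugate w \<bullet> (A *\<^sub>v w) = (\<Sum>i<N. cnj (v i) * (\<Sum>j<N. A $$ (i,j) * v j))"
      using A unfolding w_def by (simp add: scalar_prod_def atLeast0LessThan)
    also have "\<dots> = QF {..<N} (\<lambda>i j. A $$ (i,j)) v"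
      unfolding QF_def by (simp add: sum_distrib_left mult.assoc)
    finally show ?thesis using assms w unfolding psd_def by metis
  qed
  then show ?thesis using herm unfolding posf_def by blast
qed

lemma psd_brep:
  assumes "psd N A"
  shows "\<exists>(K::nat) f. brep N A f f {..<K}"
proof -
  obtain K :: nat and f where f: "\<forall>i\<in>{..<N}. \<forall>j\<in>{..<N}. A $$ (i,j) = (\<Sum>\<kappa><K. f \<kappa> i * cnj (f \<kappa> j))"
    using posf_decomp[OF _ psd_posf[OF assms]] by blast
  then have "brep N A f f {..<K}" unfolding brep_def by auto
  then show ?thesis by blast
qed

lemma Psi_entry:
  assumes U: "U \<in> carrier_mat (d*n) (d*n)" and X: "X \<in> carrier_mat d d" and E: "E \<in> carrier_mat n n"
    and a: "a < d" "a' < d"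
  shows "ptrace_E d n (U * kron X E * adj U) $$ (a,a') =
    (\<Sum>b<n. \<Sum>y<d*n. (\<Sum>x<d*n. U $$ (a*n+b,x) * (X $$ (x div n, y div n) * E $$ (x mod n, y mod n))) * cnj (U $$ (a'*n+b,y)))"
proof -
  have "ptrace_E d n (U * kron X E * adj U) $$ (a,a') = (\<Sum>b<n. (U * kron X E * adj U) $$ (a*n+b, a'*n+b))"
    using a unfolding ptrace_E_def by simp
  also have "\<dots> = (\<Sum>b<n. \<Sum>y<d*n. (\<Sum>x<d*n. U $$ (a*n+b,x) * (X $$ (x div n, y div n) * E $$ (x mod n, y mod n))) * cnj (U $$ (a'*n+b,y)))"
  proof (intro sum.cong refl)
    fix b assume b: "b \<in> {..<n}"
    have "(U * kron X E * adj U) $$ (a*n+b, a'*n+b) = (\<Sum>y<d*n. (\<Sum>x<d*n. U $$ (a*n+b,x) * kron X E $$ (x,y)) * cnj (U $$ (a'*n+b,y)))"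
      using entry_UKU[OF U kron_carrier[OF X E]] idx_lt a b by simp
    also have "\<dots> = (\<Sum>y<d*n. (\<Sum>x<d*n. U $$ (a*n+b,x) * (X $$ (x div n, y div n) * E $$ (x mod n, y mod n))) * cnj (U $$ (a'*n+b,y)))"
      using X E unfolding kron_def by (intro sum.cong refl) simp
    finally show "(U * kron X E * adj U) $$ (a*n+b, a'*n+b) = \<dots>" .
  qed
  finally show ?thesis .
qed

lemma Psi_linear:
  assumes U: "U \<in> carrier_mat (d*n) (d*n)" and E: "E \<in> carrier_mat n n"
  shows "linear_on d (\<lambda>X. ptrace_E d n (U * kron X E * adj U))"
  unfolding linear_on_def
proof (intro conjI ballI allI)
  fix X :: "complex mat" assume "X \<in> carrier_mat d d"
  show "ptrace_E d n (U * kron X E * adj U) \<in> carrier_mat d d" unfolding ptrace_E_def by simp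
next
  fix X Y :: "complex mat" assume X: "X \<in> carrier_mat d d" and Y: "Y \<in> carrier_mat d d"
  have XY: "X + Y \<in> carrier_mat d d" using X Y by simp
  show "ptrace_E d n (U * kron (X + Y) E * adj U) = ptrace_E d n (U * kron X E * adj U) + ptrace_E d n (U * kron Y E * adj U)"
  proof (rule eq_matI)
    fix a a' assume "a < dim_row (ptrace_E d n (U * kron X E * adj U) + ptrace_E d n (U * kron Y E * adj U))"
      "a' < dim_col (ptrace_E d n (U * kron X E * adj U) + ptrace_E d n (U * kron Y E * adj U))"
    then have a: "a < d" "a' < d" unfolding ptrace_E_def by auto
    have xy: "\<And>x y. x < d*n \<Longrightarrow> y < d*n \<Longrightarrow> (X + Y) $$ (x div n, y div n) = X $$ (x div n, y div n) + Y $$ (x div n, y div n)"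
      using X Y by (simp add: less_mult_imp_div_less)
    have "ptrace_E d n (U * kron (X + Y) E * adj U) $$ (a,a') =
      (\<Sum>b<n. \<Sum>y<d*n. (\<Sum>x<d*n. U $$ (a*n+b,x) * ((X + Y) $$ (x div n, y div n) * E $$ (x mod n, y mod n))) * cnj (U $$ (a'*n+b,y)))"
      by (rule Psi_entry[OF U XY E a])
    also have "\<dots> = (\<Sum>b<n. \<Sum>y<d*n. (\<Sum>x<d*n. U $$ (a*n+b,x) * (X $$ (x div n, y div n) * E $$ (x mod n, y mod n))) * cnj (U $$ (a'*n+b,y)))
       + (\<Sum>b<n. \<Sum>y<d*n. (\<Sum>x<d*n. U $$ (a*n+b,x) * (Y $$ (x div n, y div n) * E $$ (x mod n, y mod n))) * cnj (U $$ (a'*n+b,y)))"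
      by (simp add: xy sum.distrib distrib_left distrib_right)
    also have "\<dots> = (ptrace_E d n (U * kron X E * adj U) + ptrace_E d n (U * kron Y E * adj U)) $$ (a,a')"
      using Psi_entry[OF U X E a] Psi_entry[OF U Y E a] a unfolding ptrace_E_def by simp
    finally show "ptrace_E d n (U * kron (X + Y) E * adj U) $$ (a,a') = (ptrace_E d n (U * kron X E * adj U) + ptrace_E d n (U * kron Y E * adj U)) $$ (a,a')" .
  qed (simp_all add: ptrace_E_def)
next
  fix X :: "complex mat" and c :: complex assume X: "X \<in> carrier_mat d d"
  have cX: "c \<cdot>\<^sub>m X \<in> carrier_mat d d" using X by simp
  show "ptrace_E d n (U * kron (c \<cdot>\<^sub>m X) E * adj U) = c \<cdot>\<^sub>m ptrace_E d n (U * kron X E * adj U)"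
  proof (rule eq_matI)
    fix a a' assume "a < dim_row (c \<cdot>\<^sub>m ptrace_E d n (U * kron X E * adj U))"
      "a' < dim_col (c \<cdot>\<^sub>m ptrace_E d n (U * kron X E * adj U))"
    then have a: "a < d" "a' < d" unfolding ptrace_E_def by auto
    have xy: "\<And>x y. x < d*n \<Longrightarrow> y < d*n \<Longrightarrow> (c \<cdot>\<^sub>m X) $$ (x div n, y div n) = c * X $$ (x div n, y div n)"
      using X by (simp add: less_mult_imp_div_less)
    have "ptrace_E d n (U * kron (c \<cdot>\<^sub>m X) E * adj U) $$ (a,a') =
      (\<Sum>b<n. \<Sum>y<d*n. (\<Sum>x<d*n. U $$ (a*n+b,x) * ((c \<cdot>\<^sub>m X) $$ (x div n, y div n) * E $$ (x mod n, y mod n))) * cnj (U $$ (a'*n+b,y)))"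
      by (rule Psi_entry[OF U cX E a])
    also have "\<dots> = c * (\<Sum>b<n. \<Sum>y<d*n. (\<Sum>x<d*n. U $$ (a*n+b,x) * (X $$ (x div n, y div n) * E $$ (x mod n, y mod n))) * cnj (U $$ (a'*n+b,y)))"
      by (simp add: xy sum_distrib_left mult_ac)
    also have "\<dots> = (c \<cdot>\<^sub>m ptrace_E d n (U * kron X E * adj U)) $$ (a,a')"
      using Psi_entry[OF U X E a] a unfolding ptrace_E_def by simp
    finally show "ptrace_E d n (U * kron (c \<cdot>\<^sub>m X) E * adj U) $$ (a,a') = (c \<cdot>\<^sub>m ptrace_E d n (U * kron X E * adj U)) $$ (a,a')" .
  qed (simp_all add: ptrace_E_def)
qed



lemma cp_from_rep:
  assumes U: "U \<in> carrier_mat (d*n) (d*n)" and E: "E \<in> carrier_mat n n" and bE: "brep n E Gf Gf T"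
    and \<Phi>: "\<forall>X\<in>carrier_mat d d. \<Phi> X = ptrace_E d n (U * kron X E * adj U)"
  shows "completely_positive d \<Phi>"
  unfolding completely_positive_def
proof (intro conjI allI impI)
  have L: "linear_on d (\<lambda>X. ptrace_E d n (U * kron X E * adj U))" by (rule Psi_linear[OF U E])
  show "linear_on d \<Phi>" unfolding linear_on_def
  proof (intro conjI ballI allI)
    fix X :: "complex mat" assume X: "X \<in> carrier_mat d d"
    show "\<Phi> X \<in> carrier_mat d d" using L X \<Phi> unfolding linear_on_def by simp
  next
    fix X Y :: "complex mat" assume X: "X \<in> carrier_mat d d" and Y: "Y \<in> carrier_mat d d"
    have XY: "X + Y \<in> carrier_mat d d" using X Y by simp
    show "\<Phi> (X + Y) = \<Phi> X + \<Phi> Y" using L X Y XY \<Phi> unfolding linear_on_def by simp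
  next
    fix X :: "complex mat" and c :: complex assume X: "X \<in> carrier_mat d d"
    have cX: "c \<cdot>\<^sub>m X \<in> carrier_mat d d" using X by simp
    show "\<Phi> (c \<cdot>\<^sub>m X) = c \<cdot>\<^sub>m \<Phi> X" using L X cX \<Phi> unfolding linear_on_def by simp
  qed
  fix k M assume M: "psd (k*d) M"
  obtain KM :: nat and fM where bM: "brep (k*d) M fM fM {..<KM}" using psd_brep[OF M] by blast
  define Fp where "Fp = (\<lambda>p \<kappa> c. fM \<kappa> (p*d+c))"
  define Y where "Y = (\<lambda>p q. mat d d (\<lambda>(a,a'). M $$ (p*d+a, q*d+a')))"
  have Ycar: "Y p q \<in> carrier_mat d d" for p q unfolding Y_def by simp
  have bY: "brep d (Y p q) (Fp p) (Fp q) {..<KM}" if pq: "p < k" "q < k" for p q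
    unfolding brep_def
  proof (intro conjI allI impI)
    show "finite {..<KM}" by simp
    fix a a' assume a: "a < d" "a' < d"
    have "Y p q $$ (a,a') = M $$ (p*d+a, q*d+a')" unfolding Y_def using a by simp
    also have "\<dots> = (\<Sum>\<kappa>\<in>{..<KM}. fM \<kappa> (p*d+a) * cnj (fM \<kappa> (q*d+a')))"
      using bM idx_lt[OF pq(1) a(1)] idx_lt[OF pq(2) a(2)] unfolding brep_def by simp
    finally show "Y p q $$ (a,a') = (\<Sum>\<kappa>\<in>{..<KM}. Fp p \<kappa> a * cnj (Fp q \<kappa> a'))"
      unfolding Fp_def .
  qed
  have finT: "finite T" using bE unfolding brep_def by simp
  define Z where "Z = (\<lambda>s i. TT (d*n) U Gf n (Fp (i div d)) s (i mod d))"
  have "brep (k*d) (ampliate k d \<Phi> M) Z Z (({..<KM} \<times> T) \<times> {..<n})"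
    unfolding brep_def
  proof (intro conjI allI impI)
    show "finite (({..<KM} \<times> T) \<times> {..<n})" using finT by simp
    fix i j assume ij: "i < k*d" "j < k*d"
    then have d0: "d > 0" by (cases d) auto
    have pq: "i div d < k" "j div d < k" using ij d0
      by (simp_all add: less_mult_imp_div_less mult.commute)
    have am: "i mod d < d" "j mod d < d" using d0 by simp_all
    have "ampliate k d \<Phi> M $$ (i,j) = \<Phi> (Y (i div d) (j div d)) $$ (i mod d, j mod d)"
      unfolding ampliate_def Y_def using ij by simp
    also have "\<dots> = ptrace_E d n (U * kron (Y (i div d) (j div d)) E * adj U) $$ (i mod d, j mod d)"
      using \<Phi> Ycar by simp
    also have "\<dots> = (\<Sum>s\<in>({..<KM} \<times> T) \<times> {..<n}. Z s i * cnj (Z s j))"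
      using phi_rep[OF U Ycar E bY[OF pq] bE] am unfolding brep_def Z_def by simp
    finally show "ampliate k d \<Phi> M $$ (i,j) = (\<Sum>s\<in>({..<KM} \<times> T) \<times> {..<n}. Z s i * cnj (Z s j))" .
  qed
  moreover have "ampliate k d \<Phi> M \<in> carrier_mat (k*d) (k*d)" unfolding ampliate_def by simp
  ultimately show "psd (k*d) (ampliate k d \<Phi> M)" using brep_psd by blast
qed

theorem mainTheorem1:
  fixes d n :: nat and \<eta> U1 U2 :: "complex mat"
    and Lam_ts G :: "complex mat \<Rightarrow> complex mat"
  assumes eta: "density n \<eta>"
    and U1: "unitary_mat (d*n) U1" and U2: "unitary_mat (d*n) U2"
    and oCP1: "\<forall>\<rho>. density d \<rho> \<longrightarrow> (\<forall>\<sigma> \<in> carrier_mat d d. Lam_ts_rho d n \<eta> U1 U2 \<rho> \<sigma> = Lam_ts \<sigma>)"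
    and oCP2: "\<forall>X \<in> carrier_mat d d. Lam_tr d n \<eta> U1 U2 X = Lam_ts (Lam_sr d n \<eta> U1 X)"
    and inv: "\<forall>X \<in> carrier_mat d d. G X \<in> carrier_mat d d \<and> G (Lam_sr d n \<eta> U1 X) = X \<and> Lam_sr d n \<eta> U1 (G X) = X"
  shows "completely_positive d (\<lambda>X. Lam_tr d n \<eta> U1 U2 (G X))"
proof (cases "d = 0")
  case True
  have psd0: "psd 0 A" if "A \<in> carrier_mat 0 0" for A
    by (rule brep_psd[of A 0 "\<lambda>(_::unit) _. 0" "{}"]) (use that in \<open>auto simp: brep_def\<close>)
  show ?thesis unfolding completely_positive_def linear_on_def
  proof (intro conjI ballI allI impI)
    fix X :: "complex mat"
    show "Lam_tr d n \<eta> U1 U2 (G X) \<in> carrier_mat d d" unfolding Lam_tr_def ptrace_E_def by simp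
  next
    fix X Y :: "complex mat"
    show "Lam_tr d n \<eta> U1 U2 (G (X + Y)) = Lam_tr d n \<eta> U1 U2 (G X) + Lam_tr d n \<eta> U1 U2 (G Y)"
      by (rule eq_matI) (simp_all add: Lam_tr_def ptrace_E_def True)
  next
    fix X :: "complex mat" and c :: complex
    show "Lam_tr d n \<eta> U1 U2 (G (c \<cdot>\<^sub>m X)) = c \<cdot>\<^sub>m Lam_tr d n \<eta> U1 U2 (G X)"
      by (rule eq_matI) (simp_all add: Lam_tr_def ptrace_E_def True)
  next
    fix k M
    show "psd (k*d) (ampliate k d (\<lambda>X. Lam_tr d n \<eta> U1 U2 (G X)) M)"
      using psd0 True unfolding ampliate_def by simp
  qed
next
  case False
  then have d0: "d > 0" by simp
  define \<rho> :: "complex mat" where "\<rho> = mat d d (\<lambda>(i,j). if i = 0 \<and> j = 0 then 1 else 0)"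
  have \<rho>car: "\<rho> \<in> carrier_mat d d" unfolding \<rho>_def by simp
  have b\<rho>: "brep d \<rho> (\<lambda>(_::unit) i. if i = 0 then 1 else 0) (\<lambda>(_::unit) i. if i = 0 then 1 else 0) {()}"
    unfolding brep_def \<rho>_def by auto
  have \<rho>dens: "density d \<rho>"
    unfolding density_def
  proof
    show "psd d \<rho>" by (rule brep_psd[OF \<rho>car b\<rho>])
    have "mtrace \<rho> = (\<Sum>i<d. if i = 0 then 1 else 0)" unfolding mtrace_def \<rho>_def
      by (intro sum.cong) auto
    also have "\<dots> = 1" using d0 by simp
    finally show "mtrace \<rho> = 1" .
  qed
  have \<eta>psd: "psd n \<eta>" using eta unfolding density_def by simp
  then have \<eta>car: "\<eta> \<in> carrier_mat n n" unfolding psd_def by simp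
  obtain K\<eta> :: nat and f\<eta> where b\<eta>: "brep n \<eta> f\<eta> f\<eta> {..<K\<eta>}" using psd_brep[OF \<eta>psd] by blast
  have U1car: "U1 \<in> carrier_mat (d*n) (d*n)" and U2car: "U2 \<in> carrier_mat (d*n) (d*n)"
    using U1 U2 unfolding unitary_mat_def by auto
  define \<eta>' where "\<eta>' = ptrace_S d n (U1 * kron \<rho> \<eta> * adj U1)"
  note b\<eta>' = brep_ptrace_S[OF brep_cong[OF U1car kron_carrier[OF \<rho>car \<eta>car] brep_kron[OF \<rho>car \<eta>car b\<rho> b\<eta>]], folded \<eta>'_def]
  have \<eta>'car: "\<eta>' \<in> carrier_mat n n" unfolding \<eta>'_def ptrace_S_def by simp
  have \<Phi>: "\<forall>X\<in>carrier_mat d d. Lam_tr d n \<eta> U1 U2 (G X) = ptrace_E d n (U2 * kron X \<eta>' * adj U2)"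
  proof
    fix X :: "complex mat" assume X: "X \<in> carrier_mat d d"
    have GX: "G X \<in> carrier_mat d d" using inv X by blast
    have "Lam_tr d n \<eta> U1 U2 (G X) = Lam_ts (Lam_sr d n \<eta> U1 (G X))" using oCP2 GX by blast
    also have "Lam_sr d n \<eta> U1 (G X) = X" using inv X by blast
    also have "Lam_ts X = Lam_ts_rho d n \<eta> U1 U2 \<rho> X" using oCP1 \<rho>dens X by metis
    also have "\<dots> = ptrace_E d n (U2 * kron X \<eta>' * adj U2)" unfolding Lam_ts_rho_def \<eta>'_def eta_s_def ..
    finally show "Lam_tr d n \<eta> U1 U2 (G X) = ptrace_E d n (U2 * kron X \<eta>' * adj U2)" .
  qed
  show ?thesis by (rule cp_from_rep[OF U2car \<eta>'car b\<eta>' \<Phi>])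
qed

end
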